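(* Let $(V,g_{ij},\rho,p)$ be a spherically symmetric static perfect fluid solution of the Euler–Einstein equations $\Delta V=4\pi(\rho+3p)V$, $R_{ij}=V^{-1}\nabla_i\nabla_jV+4\pi(\rho-p)g_{ij}$, $\nabla_ip=-V^{-1}(\rho+p)\nabla_iV$ on a 3-manifold with barotropic equation of state $\rho=\rho(p)$, and write $g=h(r)\,dr^2+r^2(d\theta^2+\sin^2\theta\,d\phi^2)$ with $h>0$. Let $\xi$ be the vector field with $\xi_a dx^a=r\sqrt{h}\,dr$ (a conformal Killing vector, $\nabla_{(a}\xi_{b)}=h^{-1/2}g_{ab}$). Let $Y=V/V_S$, regard $\rho,p$ as functions of $Y$, let $H_0(Y)=\rho+\rho Y+6pY$, and define $$\sigma_{ij}=\frac{1-Y^2}{Y}\nabla_i\nabla_jY+6Y_{,i}Y_{,j}-2g_{ij}Y_{,d}Y^{,d}+g_{ij}\big[-4\pi(1-Y^2)(\rho+p)-16\pi pY(1-Y)\big]-16\pi g_{ij}\int_1^Y H_0(Y')\,dY'.$$ Then $$\nabla^i(\sigma_{ij}\xi^j)=-8\pi\,\frac{1}{\sqrt h}\Big[(1-Y)H_0(Y)+6\int_1^Y H_0(Y')\,dY'\Big].$$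
   Context: $V>0$ is the norm of the static Killing vector of the spacetime metric $-V^2dt^2+g_{ij}dx^idx^j$; $\nabla$, $\Delta$ refer to $g$. $V_S$ is the value of $V$ on the fluid surface $\{p=0\}$ for finite fluids and $V_S=1$ (the value at infinity) for fluids extending to infinity. By the Euler equation, $\log Y=-\int_0^p(\rho(p')+p')^{-1}dp'$, so $Y\in(0,1]$ is a monotone function of $p$ and $\rho,p$ can be regarded as functions of $Y$. *)

theory Defs
  imports "HOL-Analysis.Analysis"
begin

text \<open>A point is given by its
coordinates x 0, x 1, x 2 (only these three are ever varied); indices range over {0,1,2}.
Here the chart is (r, theta, phi) = (x 0, x 1, x 2).\<close>

type_synonym pt = "nat \<Rightarrow> real"

definition pd :: "(pt \<Rightarrow> real) \<Rightarrow> nat \<Rightarrow> pt \<Rightarrow> real" where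
  "pd f i x = deriv (\<lambda>t. f (x(i := t))) (x i)"

definition cof3 :: "(nat \<Rightarrow> nat \<Rightarrow> real) \<Rightarrow> nat \<Rightarrow> nat \<Rightarrow> real" where
  "cof3 A i j =
     A ((i+1) mod 3) ((j+1) mod 3) * A ((i+2) mod 3) ((j+2) mod 3)
   - A ((i+1) mod 3) ((j+2) mod 3) * A ((i+2) mod 3) ((j+1) mod 3)"

definition det3 :: "(nat \<Rightarrow> nat \<Rightarrow> real) \<Rightarrow> real" where
  "det3 A = (\<Sum>j<3. A 0 j * cof3 A 0 j)"

definition inv3 :: "(nat \<Rightarrow> nat \<Rightarrow> real) \<Rightarrow> nat \<Rightarrow> nat \<Rightarrow> real" where
  "inv3 A i j = cof3 A j i / det3 A"

definition ginv :: "(pt \<Rightarrow> nat \<Rightarrow> nat \<Rightarrow> real) \<Rightarrow> pt \<Rightarrow> nat \<Rightarrow> nat \<Rightarrow> real" where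
  "ginv g x = inv3 (g x)"

definition christ :: "(pt \<Rightarrow> nat \<Rightarrow> nat \<Rightarrow> real) \<Rightarrow> nat \<Rightarrow> nat \<Rightarrow> nat \<Rightarrow> pt \<Rightarrow> real" where
  "christ g k i j x = (1/2) * (\<Sum>l<3. ginv g x k l *
      (pd (\<lambda>y. g y j l) i x + pd (\<lambda>y. g y i l) j x - pd (\<lambda>y. g y i j) l x))"

definition hess :: "(pt \<Rightarrow> nat \<Rightarrow> nat \<Rightarrow> real) \<Rightarrow> (pt \<Rightarrow> real) \<Rightarrow> pt \<Rightarrow> nat \<Rightarrow> nat \<Rightarrow> real" where
  "hess g f x i j = pd (\<lambda>y. pd f j y) i x - (\<Sum>k<3. christ g k i j x * pd f k x)"

definition lap :: "(pt \<Rightarrow> nat \<Rightarrow> nat \<Rightarrow> real) \<Rightarrow> (pt \<Rightarrow> real) \<Rightarrow> pt \<Rightarrow> real" where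
  "lap g f x = (\<Sum>i<3. \<Sum>j<3. ginv g x i j * hess g f x i j)"

definition ricci :: "(pt \<Rightarrow> nat \<Rightarrow> nat \<Rightarrow> real) \<Rightarrow> pt \<Rightarrow> nat \<Rightarrow> nat \<Rightarrow> real" where
  "ricci g x i j = (\<Sum>k<3. pd (\<lambda>y. christ g k i j y) k x - pd (\<lambda>y. christ g k i k y) j x
      + (\<Sum>l<3. christ g k k l x * christ g l i j x - christ g k j l x * christ g l i k x))"

definition gnorm2 :: "(pt \<Rightarrow> nat \<Rightarrow> nat \<Rightarrow> real) \<Rightarrow> (pt \<Rightarrow> real) \<Rightarrow> pt \<Rightarrow> real" where
  "gnorm2 g f x = (\<Sum>i<3. \<Sum>j<3. ginv g x i j * pd f i x * pd f j x)"

definition raise :: "(pt \<Rightarrow> nat \<Rightarrow> nat \<Rightarrow> real) \<Rightarrow> (pt \<Rightarrow> nat \<Rightarrow> real) \<Rightarrow> pt \<Rightarrow> nat \<Rightarrow> real" where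
  "raise g w x i = (\<Sum>j<3. ginv g x i j * w x j)"

definition divg :: "(pt \<Rightarrow> nat \<Rightarrow> nat \<Rightarrow> real) \<Rightarrow> (pt \<Rightarrow> nat \<Rightarrow> real) \<Rightarrow> pt \<Rightarrow> real" where
  "divg g w x = (\<Sum>i<3. \<Sum>j<3. ginv g x i j *
      (pd (\<lambda>y. w y i) j x - (\<Sum>k<3. christ g k j i x * w x k)))"

definition sph_metric :: "(real \<Rightarrow> real) \<Rightarrow> pt \<Rightarrow> nat \<Rightarrow> nat \<Rightarrow> real" where
  "sph_metric h x i j =
     (if i = j then (if i = 0 then h (x 0) else if i = 1 then (x 0)\<^sup>2 else (x 0)\<^sup>2 * (sin (x 1))\<^sup>2)
      else 0)"

definition xi_cov :: "(real \<Rightarrow> real) \<Rightarrow> pt \<Rightarrow> nat \<Rightarrow> real" where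
  "xi_cov h x a = (if a = 0 then x 0 * sqrt (h (x 0)) else 0)"

definition H0 :: "(real \<Rightarrow> real) \<Rightarrow> (real \<Rightarrow> real) \<Rightarrow> real \<Rightarrow> real" where
  "H0 rho p y = rho y + rho y * y + 6 * p y * y"

definition intH0 :: "(real \<Rightarrow> real) \<Rightarrow> (real \<Rightarrow> real) \<Rightarrow> real \<Rightarrow> real" where
  "intH0 rho p y = (if y \<le> 1 then - integral {y..1} (H0 rho p) else integral {1..y} (H0 rho p))"

definition sigma :: "(pt \<Rightarrow> nat \<Rightarrow> nat \<Rightarrow> real) \<Rightarrow> (pt \<Rightarrow> real) \<Rightarrow> (real \<Rightarrow> real) \<Rightarrow> (real \<Rightarrow> real)
                      \<Rightarrow> pt \<Rightarrow> nat \<Rightarrow> nat \<Rightarrow> real" where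
  "sigma g Yf rho p x i j =
     (let Y = Yf x in
       (1 - Y\<^sup>2) / Y * hess g Yf x i j + 6 * pd Yf i x * pd Yf j x
       - 2 * g x i j * gnorm2 g Yf x
       + g x i j * (- 4 * pi * (1 - Y\<^sup>2) * (rho Y + p Y) - 16 * pi * p Y * Y * (1 - Y))
       - 16 * pi * g x i j * intH0 rho p Y)"

end

theory Submission
  imports Defs
begin


lemma ein_alg:
  fixes t h V V1 V2 h1 rho p :: real
  assumes t: "t > 0" and h: "h > 0" and V: "V > 0"
  and L: "(V2 - h1 / (2*h) * V1) / h + 2 * V1 / (t * h) = 4*pi*(rho + 3*p)*V"
  and R0: "h1 / (t * h) = (V2 - h1 / (2*h) * V1) / V + 4*pi*(rho - p)*h"
  and R1: "1 - 1/h + t * h1 / (2 * h^2) = (t / h * V1) / V + 4*pi*(rho - p)*t^2"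
  shows "V2 - h1 / (2*h) * V1 = 4*pi*(rho+3*p)*V*h - 2*V1/t"
    "h1 = t*h*(8*pi*(rho+p)*h) - 2*h*V1/V"
    "2*t*V1 = V*(h - 1 + 8*pi*p*t^2*h)"
proof -
  show E: "V2 - h1 / (2*h) * V1 = 4*pi*(rho+3*p)*V*h - 2*V1/t"
    using L t h by (simp add: field_simps)
  show H: "h1 = t*h*(8*pi*(rho+p)*h) - 2*h*V1/V"
    using R0 t h V unfolding E by (simp add: field_simps)
  have X: "1 - 1/h + t * (t*h*(8*pi*(rho+p)*h) - 2*h*V1/V) / (2 * h^2) = (t / h * V1) / V + 4*pi*(rho - p)*t^2"
    using R1 unfolding H[symmetric] .
  have a: "t * (t*h*(8*pi*(rho+p)*h) - 2*h*V1/V) / (2 * h^2) = 4*pi*(rho+p)*t^2 - t*V1/(h*V)"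
    using h V by (simp add: field_simps power2_eq_square)
  have a2: "(t / h * V1) / V = t*V1/(h*V)" by simp
  have b: "2*t*V1/(h*V) = 1 - 1/h + 8*pi*p*t^2"
    using X unfolding a a2 by (simp add: algebra_simps)
  then show "2*t*V1 = V*(h - 1 + 8*pi*p*t^2*h)"
    using h V by (simp add: field_simps)
qed

lemma sig_alg:
  fixes t h V VS V1 V2 h1 rho p F :: real
  assumes t: "t > 0" and h: "h > 0" and V: "V > 0" and VS: "VS > 0"
  and E: "V2 - h1 / (2*h) * V1 = 4*pi*(rho+3*p)*V*h - 2*V1/t"
  and TOV: "2*t*V1 = V*(h - 1 + 8*pi*p*t^2*h)"
  shows "((1 - (V/VS)^2) / (V/VS) * (V2/VS - h1 / (2*h) * (V1/VS)) + 4 * (V1/VS)^2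
    + h * (- 4 * pi * (1 - (V/VS)^2) * (rho + p) - 16 * pi * p * (V/VS) * (1 - V/VS))
    - 16 * pi * h * F) * (t * sqrt h / h)
    = (8*pi*p*h*(1-V/VS)^2 - (1-(V/VS)^2)*(h - 1 + 8*pi*p*t^2*h)/t^2 + (V/VS)^2*(h - 1 + 8*pi*p*t^2*h)^2/t^2 - 16*pi*h*F) * t / sqrt h"
proof -
  have V1: "V1 = V*(h - 1 + 8*pi*p*t^2*h) / (2*t)" using TOV t by (simp add: field_simps)
  have E': "V2/VS - h1 / (2*h) * (V1/VS) = (4*pi*(rho+3*p)*V*h - 2*V1/t) / VS"
    using E VS by (simp add: field_simps)
  have sq: "sqrt h / h = 1 / sqrt h" using h by (simp add: field_simps real_sqrt_divide[symmetric])
  have s: "t * sqrt h / h = t / sqrt h" using sq by (metis times_divide_eq_right mult.right_neutral)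
  show ?thesis unfolding E' s unfolding V1 using t h V VS
    by (simp add: field_simps power2_eq_square)
qed

definition Sx :: "real \<Rightarrow> real \<Rightarrow> real \<Rightarrow> real \<Rightarrow> real \<Rightarrow> real" where
  "Sx r h P Y F = 8*pi*P*h*(1-Y)^2 - (1-Y^2)*(h - 1 + 8*pi*P*r^2*h)/r^2
     + Y^2*(h - 1 + 8*pi*P*r^2*h)^2/r^2 - 16*pi*h*F"

definition Sdx :: "real \<Rightarrow> real \<Rightarrow> real \<Rightarrow> real \<Rightarrow> real \<Rightarrow> real \<Rightarrow> real \<Rightarrow> real \<Rightarrow> real \<Rightarrow> real" where
  "Sdx r h P Y F h1 P1 Y1 F1 = (let A = h - 1 + 8*pi*P*r^2*h;
      A1 = h1 + 8*pi*(P1*r^2*h + P*2*r*h + P*r^2*h1) in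
     8*pi*(P1*h*(1-Y)^2 + P*h1*(1-Y)^2 - 2*P*h*(1-Y)*Y1)
     - (-2*Y*Y1*A/r^2 + (1-Y^2)*(A1/r^2 - 2*A/r^3))
     + (2*Y*Y1*A^2/r^2 + Y^2*(2*A*A1/r^2 - 2*A^2/r^3)) - 16*pi*(h1*F + h*F1))"

definition W1x :: "real \<Rightarrow> real \<Rightarrow> real \<Rightarrow> real \<Rightarrow> real \<Rightarrow> real \<Rightarrow> real \<Rightarrow> real \<Rightarrow> real \<Rightarrow> real" where
  "W1x r h P Y F h1 P1 Y1 F1 = Sdx r h P Y F h1 P1 Y1 F1 * r / sqrt h + Sx r h P Y F / sqrt h
     - Sx r h P Y F * r * h1 / (2 * h * sqrt h)"


lemma dA:
  fixes hf Pf :: "real \<Rightarrow> real"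
  assumes hD: "(hf has_real_derivative h1) (at r)" and PD: "(Pf has_real_derivative P1) (at r)"
  shows "((\<lambda>t. hf t - 1 + 8*pi*Pf t*t^2*hf t) has_real_derivative
     h1 + 8*pi*(P1*r^2*hf r + Pf r*2*r*hf r + Pf r*r^2*h1)) (at r)"
  by (auto intro!: derivative_eq_intros hD PD) (simp add: algebra_simps)

lemma dS:
  fixes hf Pf Yf Ff Af :: "real \<Rightarrow> real"
  assumes r: "r > 0" and hD: "(hf has_real_derivative h1) (at r)" and PD: "(Pf has_real_derivative P1) (at r)"
  and YD: "(Yf has_real_derivative Y1) (at r)" and FD: "(Ff has_real_derivative F1) (at r)"
  and AD: "(Af has_real_derivative A1) (at r)"
  shows "((\<lambda>t. 8*pi*Pf t*hf t*(1-Yf t)^2 - (1-(Yf t)^2)*Af t/t^2 + (Yf t)^2*(Af t)^2/t^2 - 16*pi*hf t*Ff t)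
    has_real_derivative
     8*pi*(P1*hf r*(1-Yf r)^2 + Pf r*h1*(1-Yf r)^2 - 2*Pf r*hf r*(1-Yf r)*Y1)
     - (-2*Yf r*Y1*Af r/r^2 + (1-(Yf r)^2)*(A1/r^2 - 2*Af r/r^3))
     + (2*Yf r*Y1*(Af r)^2/r^2 + (Yf r)^2*(2*Af r*A1/r^2 - 2*(Af r)^2/r^3)) - 16*pi*(h1*Ff r + hf r*F1)) (at r)"
  using r
  apply (auto intro!: derivative_eq_intros hD PD YD FD AD)
  apply (simp add: field_simps power2_eq_square)
  apply algebra
  done

lemma dW:
  fixes hf Sf :: "real \<Rightarrow> real"
  assumes r: "r > 0" and h: "hf r > 0" and hD: "(hf has_real_derivative h1) (at r)"
  and SD: "(Sf has_real_derivative S1) (at r)"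
  shows "((\<lambda>t. Sf t * t / sqrt (hf t)) has_real_derivative
     S1 * r / sqrt (hf r) + Sf r / sqrt (hf r) - Sf r * r * h1 / (2 * hf r * sqrt (hf r))) (at r)"
proof -
  have e: "sqrt (hf r) * (sqrt (hf r) * X) = hf r * X" for X
    using h by (simp add: mult.assoc[symmetric])
  show ?thesis using r h
    by (auto intro!: derivative_eq_intros hD SD) (simp add: field_simps power2_eq_square e)
qed

lemma core:
  fixes r h Y rho P F Y1 h1 P1 F1 :: real
  assumes r: "r \<noteq> 0" and h: "h \<noteq> 0"
  and hY1: "Y1 = Y * (h - 1 + 8*pi*P*r^2*h) / (2*r)"
  and hh1: "h1 = 8*pi*(rho+P)*h^2*r - h*(h - 1 + 8*pi*P*r^2*h)/r"
  and hP1: "P1 = -(rho+P)*(h - 1 + 8*pi*P*r^2*h)/(2*r)"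
  and hF1: "F1 = (rho + rho*Y + 6*P*Y)*Y1"
  shows "Sdx r h P Y F h1 P1 Y1 F1 * r + 3 * Sx r h P Y F - Sx r h P Y F * r * h1 / h
     = -8*pi*h*((1-Y)*(rho+rho*Y+6*P*Y) + 6*F)"
  unfolding Sdx_def Sx_def Let_def hF1 hP1 hh1 hY1
  using r h by (simp add: field_simps power2_eq_square power3_eq_cube)

lemma final_alg':
  fixes r h Y rho P F Y1 h1 P1 F1 :: real
  assumes r: "r > 0" and h: "h > 0"
  and hY1: "Y1 = Y * (h - 1 + 8*pi*P*r^2*h) / (2*r)"
  and hh1: "h1 = 8*pi*(rho+P)*h^2*r - h*(h - 1 + 8*pi*P*r^2*h)/r"
  and hP1: "P1 = -(rho+P)*(h - 1 + 8*pi*P*r^2*h)/(2*r)"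
  and hF1: "F1 = (rho + rho*Y + 6*P*Y)*Y1"
  shows "(1/h)*(W1x r h P Y F h1 P1 Y1 F1 - h1/(2*h)*(Sx r h P Y F * r / sqrt h))
          + 2*(Sx r h P Y F * r / sqrt h)/(r*h) = -8*pi*(1/sqrt h)*((1-Y)*(rho+rho*Y+6*P*Y) + 6*F)"
proof -
  have q: "sqrt h > 0" using h by simp
  have e: "(1/h)*(W1x r h P Y F h1 P1 Y1 F1 - h1/(2*h)*(Sx r h P Y F * r / sqrt h))
          + 2*(Sx r h P Y F * r / sqrt h)/(r*h)
     = (Sdx r h P Y F h1 P1 Y1 F1 * r + 3 * Sx r h P Y F - Sx r h P Y F * r * h1 / h) / (sqrt h * h)"
    unfolding W1x_def using q h r by (simp add: field_simps)
  have rn: "r \<noteq> 0" and hn: "h \<noteq> 0" using r h by auto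
  show ?thesis unfolding e core[OF rn hn hY1 hh1 hP1 hF1] using q h r by (simp add: field_simps)
qed
lemma deriv_W:
  fixes hf Pf Yf Ff :: "real \<Rightarrow> real"
  assumes r: "r > 0" and h: "hf r > 0"
  and hD: "(hf has_real_derivative h1) (at r)"
  and PD: "(Pf has_real_derivative P1) (at r)"
  and YD: "(Yf has_real_derivative Y1) (at r)"
  and FD: "(Ff has_real_derivative F1) (at r)"
  shows "((\<lambda>t. Sx t (hf t) (Pf t) (Yf t) (Ff t) * t / sqrt (hf t)) has_real_derivative
           W1x r (hf r) (Pf r) (Yf r) (Ff r) h1 P1 Y1 F1) (at r)"
proof -
  note AD = dA[OF hD PD]
  note SD = dS[OF r hD PD YD FD AD]
  note WD = dW[OF r h hD SD]
  show ?thesis using WD unfolding Sx_def W1x_def Sdx_def Let_def .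
qed


lemma intH0_deriv:
  fixes rho p :: "real \<Rightarrow> real"
  assumes rc: "continuous_on {0<..1} rho" and pc: "continuous_on {0<..1} p"
  and y: "0 < y" "y < 1"
  shows "(intH0 rho p has_real_derivative H0 rho p y) (at y)"
proof -
  have c: "continuous_on {y/2..1} (H0 rho p)"
  proof -
    have sub: "{y/2..1} \<subseteq> {0<..1}" using y by auto
    have "continuous_on {y/2..1} rho" "continuous_on {y/2..1} p"
      using continuous_on_subset[OF rc sub] continuous_on_subset[OF pc sub] by auto
    then show ?thesis unfolding H0_def[abs_def] by (intro continuous_intros)
  qed
  have d: "((\<lambda>x. integral {x..1} (H0 rho p)) has_real_derivative - H0 rho p y) (at y within {y/2..1})"
    using integral_has_real_derivative'[OF c] y by auto
  have "interior {y/2..1} = {y/2<..<(1::real)}" by simp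
  then have "at y within {y/2..1} = at y" using y by (intro at_within_interior) auto
  then have d': "((\<lambda>x. - integral {x..1} (H0 rho p)) has_real_derivative H0 rho p y) (at y)"
    using DERIV_minus[OF d] by simp
  show ?thesis
  proof (rule has_field_derivative_transform_within_open[OF d', of "{0<..<1}"])
    show "open {0<..<(1::real)}" by simp
    show "y \<in> {0<..<1}" using y by simp
    show "- integral {x..1} (H0 rho p) = intH0 rho p x" if "x \<in> {0<..<1}" for x
      using that by (simp add: intH0_def)
  qed
qed




declare One_nat_def [simp del]

lemma sum3: "(\<Sum>j<(3::nat). f j) = f 0 + f 1 + (f 2 :: real)"
  by (simp add: numeral_3_eq_3 numeral_2_eq_2 One_nat_def)

lemma less3: "(i::nat) < 3 \<longleftrightarrow> i = 0 \<or> i = 1 \<or> i = 2" by auto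

lemma pd_eqI: "((\<lambda>t. f (y(i:=t))) has_real_derivative D) (at (y i)) \<Longrightarrow> pd f i y = D"
  unfolding pd_def by (rule DERIV_imp_deriv)

lemma pd_const: "(\<And>t. f (y(i:=t)) = c) \<Longrightarrow> pd f i y = 0"
  unfolding pd_def by simp

lemma pd_local:
  assumes "open U" "y i \<in> U" "\<And>t. t \<in> U \<Longrightarrow> f (y(i:=t)) = \<phi> t"
    "(\<phi> has_real_derivative D) (at (y i))"
  shows "pd f i y = D"
  apply (rule pd_eqI)
  apply (rule has_field_derivative_transform_within_open[OF assms(4) assms(1,2)])
  using assms(3) by simp

lemma pd_r: "pd (\<lambda>z. f (z 0)) i y = (if i = 0 then deriv f (y 0) else 0)"
  unfolding pd_def by auto

definition dG :: "(real \<Rightarrow> real) \<Rightarrow> nat \<Rightarrow> nat \<Rightarrow> nat \<Rightarrow> pt \<Rightarrow> real" where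
  "dG h i j l y = (if j \<noteq> l then 0 else if j = 0 then (if i = 0 then deriv h (y 0) else 0)
     else if j = 1 then (if i = 0 then 2 * y 0 else 0)
     else (if i = 0 then 2 * y 0 * (sin (y 1))\<^sup>2 else if i = 1 then 2 * (y 0)\<^sup>2 * sin (y 1) * cos (y 1) else 0))"

lemma dG_pd: assumes "i < 3" "j < 3" "l < 3"
  shows "pd (\<lambda>y. sph_metric h y j l) i y = dG h i j l y"
proof -
  have a: "deriv (\<lambda>t. t\<^sup>2 * c) s = 2 * s * c" for s c :: real
    by (rule DERIV_imp_deriv) (auto intro!: derivative_eq_intros)
  have b: "deriv (\<lambda>t. c * (sin t)\<^sup>2) s = 2 * c * sin s * cos s" for s c :: real
    by (rule DERIV_imp_deriv) (auto intro!: derivative_eq_intros)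
  have c: "deriv (\<lambda>t. t\<^sup>2) s = 2 * s" for s :: real
    by (rule DERIV_imp_deriv) (auto intro!: derivative_eq_intros)
  show ?thesis using assms unfolding less3
    by (elim disjE; simp add: pd_def sph_metric_def dG_def a b c)
qed

definition okp :: "(real \<Rightarrow> real) \<Rightarrow> pt \<Rightarrow> bool" where
  "okp h y \<longleftrightarrow> h (y 0) \<noteq> 0 \<and> y 0 \<noteq> 0 \<and> sin (y 1) \<noteq> 0"

lemma ginv_off: assumes "i < 3" "j < 3" "i \<noteq> j"
  shows "ginv (sph_metric h) y i j = 0"
  using assms unfolding less3
  by (elim disjE; simp add: ginv_def inv3_def cof3_def sph_metric_def)

lemma det_sph: "det3 (sph_metric h y) = h (y 0) * ((y 0)\<^sup>2 * ((y 0)\<^sup>2 * (sin (y 1))\<^sup>2))"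
  by (simp add: det3_def cof3_def sum3 sph_metric_def)

lemma ginv_diag: assumes "okp h y"
  shows "ginv (sph_metric h) y 0 0 = 1 / h (y 0)"
    "ginv (sph_metric h) y 1 1 = 1 / (y 0)\<^sup>2"
    "ginv (sph_metric h) y 2 2 = 1 / ((y 0)\<^sup>2 * (sin (y 1))\<^sup>2)"
    "ginv (sph_metric h) y (Suc 0) (Suc 0) = 1 / (y 0)\<^sup>2"
  using assms unfolding ginv_def inv3_def det_sph
  by (simp_all add: cof3_def sph_metric_def okp_def field_simps)

lemma "okp h y \<Longrightarrow> christ (sph_metric h) 1 0 1 y = 1 / y 0"
  by (simp add: christ_def sum3 ginv_off ginv_diag dG_pd dG_def field_simps power2_eq_square)

definition CT :: "(real \<Rightarrow> real) \<Rightarrow> nat \<Rightarrow> nat \<Rightarrow> nat \<Rightarrow> pt \<Rightarrow> real" where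
  "CT h k i j y = (
   if k = 0 then (if i = 0 \<and> j = 0 then deriv h (y 0) / (2 * h (y 0))
        else if i = 1 \<and> j = 1 then - y 0 / h (y 0)
        else if i = 2 \<and> j = 2 then - y 0 * (sin (y 1))\<^sup>2 / h (y 0) else 0)
   else if k = 1 then (if (i = 0 \<and> j = 1) \<or> (i = 1 \<and> j = 0) then 1 / y 0
        else if i = 2 \<and> j = 2 then - sin (y 1) * cos (y 1) else 0)
   else (if (i = 0 \<and> j = 2) \<or> (i = 2 \<and> j = 0) then 1 / y 0
        else if (i = 1 \<and> j = 2) \<or> (i = 2 \<and> j = 1) then cos (y 1) / sin (y 1) else 0))"

lemma christ_CT: assumes "okp h y" "k < 3" "i < 3" "j < 3"
  shows "christ (sph_metric h) k i j y = CT h k i j y"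
  using assms(2-4) unfolding less3
  apply (elim disjE)
  using assms(1)
  by (simp_all add: christ_def sum3 ginv_off ginv_diag dG_pd dG_def CT_def okp_def field_simps power2_eq_square)

lemma christ_zero: "christ (sph_metric h) 0 1 0 y = 0" "christ (sph_metric h) 0 2 0 y = 0"
  by (simp_all add: christ_def sum3 ginv_off dG_pd dG_def)

lemma pd_christ:
  assumes "open U" "y m \<in> U" "\<And>t. t \<in> U \<Longrightarrow> okp h (y(m:=t))"
    "(\<phi> has_real_derivative D) (at (y m))"
    "\<And>t. t \<in> U \<Longrightarrow> CT h k i j (y(m:=t)) = \<phi> t" "k < 3" "i < 3" "j < 3"
  shows "pd (\<lambda>z. christ (sph_metric h) k i j z) m y = D"
  by (rule pd_local[of U y m "\<lambda>z. christ (sph_metric h) k i j z" \<phi> D, OF assms(1,2) _ assms(4)])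
     (simp add: christ_CT assms(3,5-))

lemma cot_deriv: assumes "sin x \<noteq> 0"
  shows "((\<lambda>t. cos t / sin t) has_real_derivative - 1 / (sin x)\<^sup>2) (at x)"
proof -
  have e: "- 1 / (sin x)\<^sup>2 = (- sin x * sin x - cos x * cos x) / (sin x * sin x)"
    using assms sin_cos_squared_add3[of x] by (simp add: field_simps power2_eq_square)
  show ?thesis unfolding e using assms by (auto intro!: derivative_eq_intros)
qed

lemma okp_S: assumes "\<forall>r\<in>I. h r > 0" "I \<subseteq> {0<..}" "y 0 \<in> I" "0 < y 1" "y 1 < pi"
  shows "okp h y"
  using assms sin_gt_zero[of "y 1"] unfolding okp_def by fastforce

lemma ricci_sph:
  assumes I: "open I" "I \<subseteq> {0<..}" and hp: "\<forall>r\<in>I. h r > 0"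
    and hd: "\<forall>r\<in>I. h differentiable (at r)"
    and y: "y 0 \<in> I" "0 < y 1" "y 1 < pi"
  shows "ricci (sph_metric h) y 0 0 = deriv h (y 0) / (y 0 * h (y 0))"
    "ricci (sph_metric h) y 1 1 = 1 - 1 / h (y 0) + y 0 * deriv h (y 0) / (2 * (h (y 0))\<^sup>2)"
proof -
  let ?G = "sph_metric h"
  have ok: "okp h y" using okp_S[OF hp I(2) y] .
  have ok0: "okp h (y(0:=t))" if "t \<in> I" for t
    using okp_S[OF hp I(2), of "y(0:=t)"] that y by simp
  have ok1: "okp h (y(1:=t))" if "t \<in> {0<..<pi}" for t
    using okp_S[OF hp I(2), of "y(1:=t)"] that y by simp
  have ok2: "okp h (y(2:=t))" for t
    using ok unfolding okp_def by simp
  have y0: "y 0 > 0" using y I by auto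
  have sy: "sin (y 1) > 0" using y sin_gt_zero by auto
  have hy: "h (y 0) > 0" using hp y by auto
  have hD: "(h has_real_derivative deriv h (y 0)) (at (y 0))"
    using hd y by (simp add: DERIV_deriv_iff_real_differentiable)
  have p1: "pd (\<lambda>z. christ ?G 1 0 0 z) 1 y = 0"
    by (rule pd_christ[where U="{0<..<pi}" and \<phi>="\<lambda>t. 0"]) (use y ok1 in \<open>auto simp: CT_def\<close>)
  have p2: "pd (\<lambda>z. christ ?G 1 0 1 z) 0 y = - 1 / (y 0)\<^sup>2"
    by (rule pd_christ[where U="I" and \<phi>="\<lambda>t. 1 / t"]) 
       (use y ok0 I y0 in \<open>auto simp: CT_def intro!: derivative_eq_intros simp: power2_eq_square\<close>)
  have p3: "pd (\<lambda>z. christ ?G 2 0 0 z) 2 y = 0"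
    by (rule pd_christ[where U="UNIV" and \<phi>="\<lambda>t. 0"]) (use ok2 in \<open>auto simp: CT_def\<close>)
  have p4: "pd (\<lambda>z. christ ?G 2 0 2 z) 0 y = - 1 / (y 0)\<^sup>2"
    by (rule pd_christ[where U="I" and \<phi>="\<lambda>t. 1 / t"]) 
       (use y ok0 I y0 in \<open>auto simp: CT_def intro!: derivative_eq_intros simp: power2_eq_square\<close>)
  have p5: "pd (\<lambda>z. christ ?G 0 1 1 z) 0 y = - 1 / h (y 0) + y 0 * deriv h (y 0) / (h (y 0))\<^sup>2"
    by (rule pd_christ[where U="I" and \<phi>="\<lambda>t. - t / h t"]) 
       (use y ok0 I y0 hy in \<open>auto simp: CT_def intro!: derivative_eq_intros hD simp: power2_eq_square field_simps\<close>)
  have p6: "pd (\<lambda>z. christ ?G 0 1 0 z) 1 y = 0"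
    by (rule pd_christ[where U="{0<..<pi}" and \<phi>="\<lambda>t. 0"]) (use y ok1 in \<open>auto simp: CT_def\<close>)
  have p7: "pd (\<lambda>z. christ ?G 2 1 1 z) 2 y = 0"
    by (rule pd_christ[where U="UNIV" and \<phi>="\<lambda>t. 0"]) (use ok2 in \<open>auto simp: CT_def\<close>)
  have p8: "pd (\<lambda>z. christ ?G 2 1 2 z) 1 y = - 1 / (sin (y 1))\<^sup>2"
    by (rule pd_christ[where U="{0<..<pi}" and \<phi>="\<lambda>t. cos t / sin t"]) 
       (use y ok1 sy cot_deriv in \<open>auto simp: CT_def\<close>)
  show "ricci (sph_metric h) y 0 0 = deriv h (y 0) / (y 0 * h (y 0))"
    using ok y0 hy unfolding ricci_def sum3 by (simp add: p1 p2 p3 p4 christ_CT CT_def field_simps power2_eq_square)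
  show "ricci (sph_metric h) y 1 1 = 1 - 1 / h (y 0) + y 0 * deriv h (y 0) / (2 * (h (y 0))\<^sup>2)"
    using ok y0 hy sy unfolding ricci_def sum3 
    apply (simp add: p5 p6 p7 p8 christ_CT CT_def field_simps power2_eq_square)
    using sin_cos_squared_add3[of "y 1"] by algebra
qed

lemma pd_zero: "pd (\<lambda>y. 0) i y = 0"
  by (simp add: pd_def)

lemma pd_rad0: "(\<lambda>y. pd (\<lambda>z. f (z 0)) 0 y) = (\<lambda>y. deriv f (y 0))"
  by (simp add: pd_r)
lemma pd_radn: "i \<noteq> 0 \<Longrightarrow> (\<lambda>y. pd (\<lambda>z. f (z 0)) i y) = (\<lambda>y. 0)"
  by (simp add: pd_r)

lemma hess_rad:
  assumes "okp h y"
  shows "hess (sph_metric h) (\<lambda>z. f (z 0)) y 0 0 = deriv (deriv f) (y 0) - deriv h (y 0) / (2 * h (y 0)) * deriv f (y 0)"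
    "hess (sph_metric h) (\<lambda>z. f (z 0)) y 1 1 = y 0 / h (y 0) * deriv f (y 0)"
    "hess (sph_metric h) (\<lambda>z. f (z 0)) y 2 2 = y 0 * (sin (y 1))\<^sup>2 / h (y 0) * deriv f (y 0)"
  using assms unfolding hess_def sum3
  by (simp_all add: pd_rad0 pd_radn pd_zero pd_r[of "deriv f"] pd_r[of f] christ_CT CT_def)

lemma hess_rad_off:
  "hess (sph_metric h) (\<lambda>z. f (z 0)) y 1 0 = 0" "hess (sph_metric h) (\<lambda>z. f (z 0)) y 2 0 = 0"
  unfolding hess_def sum3
  by (simp_all add: pd_rad0 pd_radn pd_zero pd_r[of "deriv f"] pd_r[of f] christ_zero)

lemma lap_rad:
  assumes "okp h y"
  shows "lap (sph_metric h) (\<lambda>z. f (z 0)) y = 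
     (deriv (deriv f) (y 0) - deriv h (y 0) / (2 * h (y 0)) * deriv f (y 0)) / h (y 0)
     + 2 * deriv f (y 0) / (y 0 * h (y 0))"
  using assms unfolding lap_def sum3
  by (simp add: ginv_off ginv_diag hess_rad okp_def field_simps power2_eq_square)

lemma gnorm2_rad:
  assumes "okp h y"
  shows "gnorm2 (sph_metric h) (\<lambda>z. f (z 0)) y = (deriv f (y 0))\<^sup>2 / h (y 0)"
  using assms unfolding gnorm2_def sum3
  by (simp add: ginv_off ginv_diag pd_r[of f] power2_eq_square)

lemma raise_xi:
  assumes "okp h y"
  shows "raise (sph_metric h) (xi_cov h) y 0 = y 0 * sqrt (h (y 0)) / h (y 0)"
  "raise (sph_metric h) (xi_cov h) y 1 = 0" "raise (sph_metric h) (xi_cov h) y 2 = 0"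
  using assms unfolding raise_def sum3
  by (simp_all add: ginv_off ginv_diag xi_cov_def)

lemma raise_xi_off:
  "raise (sph_metric h) (xi_cov h) y 1 = 0" "raise (sph_metric h) (xi_cov h) y 2 = 0"
  unfolding raise_def sum3
  by (simp_all add: ginv_off xi_cov_def)

lemma sigma_off:
  "sigma (sph_metric h) (\<lambda>z. f (z 0)) rho p y 1 0 = 0"
  "sigma (sph_metric h) (\<lambda>z. f (z 0)) rho p y 2 0 = 0"
  unfolding sigma_def Let_def
  by (simp_all add: hess_rad_off pd_r[of f] sph_metric_def)

lemma sigma_00:
  assumes "okp h y"
  shows "sigma (sph_metric h) (\<lambda>z. f (z 0)) rho p y 0 0 =
    (1 - (f (y 0))\<^sup>2) / f (y 0) * (deriv (deriv f) (y 0) - deriv h (y 0) / (2 * h (y 0)) * deriv f (y 0))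
    + 4 * (deriv f (y 0))\<^sup>2
    + h (y 0) * (- 4 * pi * (1 - (f (y 0))\<^sup>2) * (rho (f (y 0)) + p (f (y 0))) - 16 * pi * p (f (y 0)) * f (y 0) * (1 - f (y 0)))
    - 16 * pi * h (y 0) * intH0 rho p (f (y 0))"
  using assms unfolding sigma_def Let_def
  by (simp add: hess_rad gnorm2_rad pd_r[of f] sph_metric_def okp_def power2_eq_square)




theorem proposition5:
  fixes I :: "real set" and h V :: "real \<Rightarrow> real" and rho p :: "real \<Rightarrow> real" and VS :: real
  assumes I_open: "open I" and I_pos: "I \<subseteq> {0<..}"
    and h_pos: "\<forall>r\<in>I. h r > 0" and V_pos: "\<forall>r\<in>I. V r > 0" and VS_pos: "VS > 0"
    and h_smooth: "\<forall>k. \<forall>r\<in>I. (deriv ^^ k) h differentiable (at r)"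
    and V_smooth: "\<forall>k. \<forall>r\<in>I. (deriv ^^ k) V differentiable (at r)"
    and Y_range: "\<forall>r\<in>I. V r / VS \<in> {0<..<1}"
    and rho_cont: "continuous_on {0<..1} rho" and p_cont: "continuous_on {0<..1} p"
    and rho_diff: "\<forall>y\<in>{0<..<1}. rho differentiable (at y)"
    and p_diff: "\<forall>y\<in>{0<..<1}. p differentiable (at y)"
    and einstein_lap: "\<forall>x. x 0 \<in> I \<and> 0 < x 1 \<and> x 1 < pi \<longrightarrow>
        lap (sph_metric h) (\<lambda>y. V (y 0)) x
          = 4 * pi * (rho (V (x 0) / VS) + 3 * p (V (x 0) / VS)) * V (x 0)"
    and einstein_ric: "\<forall>x. x 0 \<in> I \<and> 0 < x 1 \<and> x 1 < pi \<longrightarrow> (\<forall>i<3. \<forall>j<3.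
        ricci (sph_metric h) x i j
          = hess (sph_metric h) (\<lambda>y. V (y 0)) x i j / V (x 0)
            + 4 * pi * (rho (V (x 0) / VS) - p (V (x 0) / VS)) * sph_metric h x i j)"
    and euler: "\<forall>x. x 0 \<in> I \<and> 0 < x 1 \<and> x 1 < pi \<longrightarrow> (\<forall>i<3.
        pd (\<lambda>y. p (V (y 0) / VS)) i x
          = - (rho (V (x 0) / VS) + p (V (x 0) / VS)) / V (x 0) * pd (\<lambda>y. V (y 0)) i x)"
    and x_dom: "x 0 \<in> I" "0 < x 1" "x 1 < pi"
  shows "divg (sph_metric h)
           (\<lambda>y i. \<Sum>j<3. sigma (sph_metric h) (\<lambda>z. V (z 0) / VS) rho p y i j
                          * raise (sph_metric h) (xi_cov h) y j) x
         = - 8 * pi * (1 / sqrt (h (x 0)))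
             * ((1 - V (x 0) / VS) * H0 rho p (V (x 0) / VS) + 6 * intH0 rho p (V (x 0) / VS))"
proof -
  let ?G = "sph_metric h"
  let ?r = "x 0"
  define w where "w = (\<lambda>y i. \<Sum>j<3. sigma ?G (\<lambda>z. V (z 0) / VS) rho p y i j * raise ?G (xi_cov h) y j)"
  have hdiff: "\<forall>r\<in>I. h differentiable (at r)" using h_smooth by (metis funpow_0)
  have hD: "(h has_real_derivative deriv h t) (at t)" if "t \<in> I" for t
    using hdiff that by (simp add: DERIV_deriv_iff_real_differentiable)
  have VD: "(V has_real_derivative deriv V t) (at t)" if "t \<in> I" for t
    using V_smooth[rule_format, of t 0] that by (simp add: DERIV_deriv_iff_real_differentiable)
  have V1D: "(deriv V has_real_derivative deriv (deriv V) t) (at t)" if "t \<in> I" for t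
    using V_smooth[rule_format, of t 1] that by (simp add: DERIV_deriv_iff_real_differentiable One_nat_def)
  have YD: "((\<lambda>s. V s / VS) has_real_derivative deriv V t / VS) (at t)" if "t \<in> I" for t
    using VD[OF that] VS_pos by (auto intro!: derivative_eq_intros)
  have dY: "deriv (\<lambda>s. V s / VS) t = deriv V t / VS" if "t \<in> I" for t
    using YD[OF that] by (rule DERIV_imp_deriv)
  have ddY: "deriv (deriv (\<lambda>s. V s / VS)) t = deriv (deriv V) t / VS" if t: "t \<in> I" for t
  proof -
    have "((\<lambda>s. deriv V s / VS) has_real_derivative deriv (deriv V) t / VS) (at t)"
      using V1D[OF t] VS_pos by (auto intro!: derivative_eq_intros)
    then have "(deriv (\<lambda>s. V s / VS) has_real_derivative deriv (deriv V) t / VS) (at t)"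
      by (rule has_field_derivative_transform_within_open[OF _ I_open t]) (simp add: dY)
    then show ?thesis by (rule DERIV_imp_deriv)
  qed
  have okt: "okp h (x(0:=t))" if "t \<in> I" for t
    by (rule okp_S[OF h_pos I_pos]) (use that x_dom in auto)
  have key: "deriv (deriv V) t - deriv h t / (2 * h t) * deriv V t
        = 4*pi*(rho (V t / VS) + 3*p (V t / VS))*V t*h t - 2*deriv V t/t
     \<and> deriv h t = t*h t*(8*pi*(rho (V t / VS) + p (V t / VS))*h t) - 2*h t*deriv V t/V t
     \<and> 2*t*deriv V t = V t*(h t - 1 + 8*pi*p (V t / VS)*t^2*h t)" if t: "t \<in> I" for t
  proof -
    let ?y = "x(0:=t)"
    have y: "?y 0 \<in> I" "0 < ?y 1" "?y 1 < pi" using t x_dom by auto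
    have ok: "okp h ?y" using okt[OF t] .
    have tp: "t > 0" using t I_pos by auto
    have hp: "h t > 0" using t h_pos by auto
    have Vp: "V t > 0" using t V_pos by auto
    have L: "(deriv (deriv V) t - deriv h t / (2 * h t) * deriv V t) / h t + 2 * deriv V t / (t * h t)
        = 4*pi*(rho (V t / VS) + 3*p (V t / VS))*V t"
      using einstein_lap[rule_format, of ?y] y lap_rad[OF ok, of V] by simp
    have R0: "deriv h t / (t * h t) = (deriv (deriv V) t - deriv h t / (2 * h t) * deriv V t) / V t
        + 4*pi*(rho (V t / VS) - p (V t / VS))*h t"
      using einstein_ric[rule_format, of ?y 0 0] y ricci_sph(1)[OF I_open I_pos h_pos hdiff y]
        hess_rad(1)[OF ok, of V] by (simp add: sph_metric_def)
    have R1: "1 - 1 / h t + t * deriv h t / (2 * (h t)^2) = (t / h t * deriv V t) / V t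
        + 4*pi*(rho (V t / VS) - p (V t / VS))*t^2"
      using einstein_ric[rule_format, of ?y 1 1] y ricci_sph(2)[OF I_open I_pos h_pos hdiff y]
        hess_rad(2)[OF ok, of V] by (simp add: sph_metric_def)
    show ?thesis using ein_alg[OF tp hp Vp L R0 R1] by blast
  qed
  have w1: "w y 1 = 0" for y
    unfolding w_def sum3 using sigma_off[of h "\<lambda>s. V s / VS" rho p y] raise_xi_off[of h y] by simp
  have w2: "w y 2 = 0" for y
    unfolding w_def sum3 using sigma_off[of h "\<lambda>s. V s / VS" rho p y] raise_xi_off[of h y] by simp
  define Wf where "Wf = (\<lambda>t. Sx t (h t) (p (V t / VS)) (V t / VS) (intH0 rho p (V t / VS)) * t / sqrt (h t))"
  have w0: "w (x(0:=t)) 0 = Wf t" if t: "t \<in> I" for t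
  proof -
    let ?y = "x(0:=t)"
    have ok: "okp h ?y" using okt[OF t] .
    have tp: "t > 0" using t I_pos by auto
    have hp: "h t > 0" using t h_pos by auto
    have Vp: "V t > 0" using t V_pos by auto
    have a: "w ?y 0 = sigma ?G (\<lambda>z. V (z 0) / VS) rho p ?y 0 0 * (t * sqrt (h t) / h t)"
      unfolding w_def sum3 using raise_xi[OF ok] by simp
    have b: "sigma ?G (\<lambda>z. V (z 0) / VS) rho p ?y 0 0 =
      (1 - (V t / VS)^2) / (V t / VS) * (deriv (deriv V) t / VS - deriv h t / (2 * h t) * (deriv V t / VS))
      + 4 * (deriv V t / VS)^2
      + h t * (- 4 * pi * (1 - (V t / VS)^2) * (rho (V t / VS) + p (V t / VS)) - 16 * pi * p (V t / VS) * (V t / VS) * (1 - V t / VS))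
      - 16 * pi * h t * intH0 rho p (V t / VS)"
      using sigma_00[OF ok, of "\<lambda>s. V s / VS" rho p] dY[OF t] ddY[OF t] by simp
    show ?thesis unfolding a b Wf_def
      using sig_alg[OF tp hp Vp VS_pos conjunct1[OF key[OF t]] conjunct2[OF conjunct2[OF key[OF t]]],
         of "intH0 rho p (V t / VS)"]
      by (simp add: Sx_def)
  qed
  have r: "?r \<in> I" using x_dom by simp
  have rp: "?r > 0" using r I_pos by auto
  have hrp: "h ?r > 0" using r h_pos by auto
  have Vrp: "V ?r > 0" using r V_pos by auto
  have Yr: "V ?r / VS \<in> {0<..<1}" using r Y_range by auto
  have pdiff: "(p has_real_derivative deriv p (V ?r / VS)) (at (V ?r / VS))"
    using p_diff Yr by (simp add: DERIV_deriv_iff_real_differentiable)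
  have PD0: "((\<lambda>t. p (V t / VS)) has_real_derivative deriv p (V ?r / VS) * (deriv V ?r / VS)) (at ?r)"
    by (rule DERIV_chain2[OF pdiff YD[OF r]])
  have eul: "deriv (\<lambda>t. p (V t / VS)) ?r = - (rho (V ?r / VS) + p (V ?r / VS)) / V ?r * deriv V ?r"
    using euler[rule_format, of x 0] x_dom pd_r[of "\<lambda>s. p (V s / VS)" 0 x] pd_r[of V 0 x] by simp
  have PD: "((\<lambda>t. p (V t / VS)) has_real_derivative - (rho (V ?r / VS) + p (V ?r / VS)) / V ?r * deriv V ?r) (at ?r)"
    using PD0 DERIV_imp_deriv[OF PD0] eul by simp
  have FD: "((\<lambda>t. intH0 rho p (V t / VS)) has_real_derivative H0 rho p (V ?r / VS) * (deriv V ?r / VS)) (at ?r)"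
    using Yr by (intro DERIV_chain2[OF intH0_deriv[OF rho_cont p_cont] YD[OF r]]) auto
  have WD: "(Wf has_real_derivative W1x ?r (h ?r) (p (V ?r / VS)) (V ?r / VS) (intH0 rho p (V ?r / VS))
       (deriv h ?r) (- (rho (V ?r / VS) + p (V ?r / VS)) / V ?r * deriv V ?r) (deriv V ?r / VS)
       (H0 rho p (V ?r / VS) * (deriv V ?r / VS))) (at ?r)"
    unfolding Wf_def by (rule deriv_W[OF rp hrp hD[OF r] PD YD[OF r] FD])
  have pdW: "pd (\<lambda>y. w y 0) 0 x = W1x ?r (h ?r) (p (V ?r / VS)) (V ?r / VS) (intH0 rho p (V ?r / VS))
       (deriv h ?r) (- (rho (V ?r / VS) + p (V ?r / VS)) / V ?r * deriv V ?r) (deriv V ?r / VS)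
       (H0 rho p (V ?r / VS) * (deriv V ?r / VS))"
    by (rule pd_local[of I x 0 "\<lambda>y. w y 0" Wf, OF I_open r _ WD]) (simp add: w0)
  have okx: "okp h x" using okt[OF r] by simp
  have wx: "w x 0 = Wf ?r" using w0[OF r] by simp
  have div: "divg ?G w x = (1 / h ?r) * (W1x ?r (h ?r) (p (V ?r / VS)) (V ?r / VS) (intH0 rho p (V ?r / VS))
       (deriv h ?r) (- (rho (V ?r / VS) + p (V ?r / VS)) / V ?r * deriv V ?r) (deriv V ?r / VS)
       (H0 rho p (V ?r / VS) * (deriv V ?r / VS)) - deriv h ?r / (2 * h ?r) * Wf ?r) + 2 * Wf ?r / (?r * h ?r)"
    unfolding divg_def sum3 using okx rp hrp
    by (simp add: ginv_off ginv_diag christ_CT CT_def pdW w1 w2 wx pd_zero okp_def field_simps power2_eq_square)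
  obtain kk where kk: "deriv (deriv V) ?r - deriv h ?r / (2 * h ?r) * deriv V ?r
        = 4*pi*(rho (V ?r / VS) + 3*p (V ?r / VS))*V ?r*h ?r - 2*deriv V ?r/?r"
     and H: "deriv h ?r = ?r*h ?r*(8*pi*(rho (V ?r / VS) + p (V ?r / VS))*h ?r) - 2*h ?r*deriv V ?r/V ?r"
     and TOV: "2*?r*deriv V ?r = V ?r*(h ?r - 1 + 8*pi*p (V ?r / VS)*?r^2*h ?r)"
    using key[OF r] by blast
  have V1: "deriv V ?r = V ?r*(h ?r - 1 + 8*pi*p (V ?r / VS)*?r^2*h ?r) / (2 * ?r)"
    using TOV rp by (simp add: field_simps)
  have hY1: "deriv V ?r / VS = (V ?r / VS) * (h ?r - 1 + 8*pi*p (V ?r / VS)*?r^2*h ?r) / (2*?r)"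
    unfolding V1 by simp
  have hh1: "deriv h ?r = 8*pi*(rho (V ?r / VS) + p (V ?r / VS))*(h ?r)^2*?r
       - h ?r*(h ?r - 1 + 8*pi*p (V ?r / VS)*?r^2*h ?r)/?r"
    unfolding H V1 using rp Vrp by (simp add: field_simps power2_eq_square)
  have hP1: "- (rho (V ?r / VS) + p (V ?r / VS)) / V ?r * deriv V ?r
      = -(rho (V ?r / VS) + p (V ?r / VS))*(h ?r - 1 + 8*pi*p (V ?r / VS)*?r^2*h ?r)/(2*?r)"
    unfolding V1 using rp Vrp by (simp add: field_simps)
  have hF1: "H0 rho p (V ?r / VS) * (deriv V ?r / VS) = (rho (V ?r / VS) + rho (V ?r / VS) * (V ?r / VS)
       + 6 * p (V ?r / VS) * (V ?r / VS)) * (deriv V ?r / VS)"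
    by (simp add: H0_def)
  have fin: "divg ?G w x = - 8 * pi * (1 / sqrt (h ?r))
             * ((1 - V ?r / VS) * H0 rho p (V ?r / VS) + 6 * intH0 rho p (V ?r / VS))"
    unfolding div Wf_def
    using final_alg'[OF rp hrp hY1 hh1 hP1 hF1] by (simp add: H0_def)
  show ?thesis using fin unfolding w_def .
qed


end
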